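(* Let $X$ be an $n$-dimensional polyhedral normed space and let $Y \subseteq X$ be a subspace of dimension $k$, where $1 \leq k \leq n-1$. Let $l$ be the minimal number of pairs on which a Chalmers–Metcalf operator for $Y$ can be supported and let $m$ be the minimal number of norming pairs that a minimal projection from $X$ onto $Y$ can have. Then $k(n-k)-m+1 \leq \dim \mathcal{P}_{\min}(X, Y) \leq k(n-k)-l+1$.
   Context: A normed space $X=(\mathbb{R}^n,\|\cdot\|)$ is polyhedral if its unit ball is a convex polytope. A projection onto $Y$ is a linear $P:X\to Y$ with $P|_Y=\mathrm{id}_Y$; $\lambda(Y,X)$ is the infimum of the operator norms of projections and $\mathcal{P}_{\min}(X,Y)$ the set of projections of norm $\lambda(Y,X)$ (minimal projections); $\dim\mathcal{P}_{\min}(X,Y)$ is the affine dimension of this convex subset of $\mathcal{L}(X,X)$. A norming pair for a projection $P$ is a pair $(x,f)\in \mathrm{ext}\,B_X\times \mathrm{ext}\,B_{X^*}$ with $f(P(x))=\|P\|$. For $x\in X$, $f\in X^*$, $x\otimes f$ is the operator $z\mapsto f(z)x$. A Chalmers–Metcalf operator for $Y$ is an operator $T=\sum_{i=1}^{l}\alpha_i x_i\otimes f_i:X\to X$ with $(x_i,f_i)\in\mathrm{ext}\,B_X\times\mathrm{ext}\,B_{X^*}$, $\alpha_i>0$, $\sum_i\alpha_i=1$, $T(Y)\subseteq Y$, and $f_i(P_0(x_i))=\|P_0\|=\lambda(Y,X)$ for all $i$ and some fixed minimal projection $P_0$; it is said to be supported on the $l$ pairs $(x_i,f_i)$. *)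

theory Defs
  imports "HOL-Analysis.Analysis"
begin

text \<open>X = (R^n, N): the space real^'n equipped with an arbitrary norm N.
  Functionals in X* are represented by vectors u via z \<mapsto> u \<bullet> z;
  operators X \<to> X are represented by matrices real^'n^'n acting by *v.\<close>

definition is_norm :: "(real^'n \<Rightarrow> real) \<Rightarrow> bool" where
  "is_norm N \<longleftrightarrow> (\<forall>x. 0 \<le> N x) \<and> (\<forall>x. N x = 0 \<longleftrightarrow> x = 0)
     \<and> (\<forall>c x. N (c *\<^sub>R x) = \<bar>c\<bar> * N x) \<and> (\<forall>x y. N (x + y) \<le> N x + N y)"

definition unit_ball :: "(real^'n \<Rightarrow> real) \<Rightarrow> (real^'n) set" where
  "unit_ball N = {x. N x \<le> 1}"

definition polyhedral :: "(real^'n \<Rightarrow> real) \<Rightarrow> bool" where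
  "polyhedral N \<longleftrightarrow> is_norm N \<and> polytope (unit_ball N)"

definition dual_ball :: "(real^'n \<Rightarrow> real) \<Rightarrow> (real^'n) set" where
  "dual_ball N = {u. \<forall>x. N x \<le> 1 \<longrightarrow> u \<bullet> x \<le> 1}"

definition op_norm :: "(real^'n \<Rightarrow> real) \<Rightarrow> real^'n^'n \<Rightarrow> real" where
  "op_norm N P = Sup {N (P *v x) | x. N x \<le> 1}"

definition is_projection :: "real^'n^'n \<Rightarrow> (real^'n) set \<Rightarrow> bool" where
  "is_projection P Y \<longleftrightarrow> (\<forall>x. P *v x \<in> Y) \<and> (\<forall>y\<in>Y. P *v y = y)"

definition proj_const :: "(real^'n \<Rightarrow> real) \<Rightarrow> (real^'n) set \<Rightarrow> real" where
  "proj_const N Y = Inf {op_norm N P | P. is_projection P Y}"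

definition min_projections :: "(real^'n \<Rightarrow> real) \<Rightarrow> (real^'n) set \<Rightarrow> (real^'n^'n) set" where
  "min_projections N Y = {P. is_projection P Y \<and> op_norm N P = proj_const N Y}"

definition norming_pairs :: "(real^'n \<Rightarrow> real) \<Rightarrow> real^'n^'n \<Rightarrow> ((real^'n) \<times> (real^'n)) set" where
  "norming_pairs N P = {(x, f). x extreme_point_of (unit_ball N) \<and> f extreme_point_of (dual_ball N)
      \<and> f \<bullet> (P *v x) = op_norm N P}"

text \<open>There is a Chalmers--Metcalf operator for Y supported on l pairs
  (x i, f i), i < l; the operator is T z = sum_i alpha_i (f_i . z) x_i.\<close>
definition CM_supported :: "(real^'n \<Rightarrow> real) \<Rightarrow> (real^'n) set \<Rightarrow> nat \<Rightarrow> bool" where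
  "CM_supported N Y l \<longleftrightarrow> (\<exists>(x::nat \<Rightarrow> real^'n) (f::nat \<Rightarrow> real^'n) (\<alpha>::nat \<Rightarrow> real) P0.
      P0 \<in> min_projections N Y \<and>
      (\<forall>i<l. x i extreme_point_of (unit_ball N) \<and> f i extreme_point_of (dual_ball N) \<and>
              \<alpha> i > 0 \<and> f i \<bullet> (P0 *v x i) = proj_const N Y) \<and>
      (\<Sum>i<l. \<alpha> i) = 1 \<and>
      (\<forall>y\<in>Y. (\<Sum>i<l. (\<alpha> i * (f i \<bullet> y)) *\<^sub>R x i) \<in> Y))"

definition min_CM_support :: "(real^'n \<Rightarrow> real) \<Rightarrow> (real^'n) set \<Rightarrow> nat" where
  "min_CM_support N Y = (LEAST l. CM_supported N Y l)"

definition min_norming_pairs :: "(real^'n \<Rightarrow> real) \<Rightarrow> (real^'n) set \<Rightarrow> nat" where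
  "min_norming_pairs N Y = (LEAST m. \<exists>P\<in>min_projections N Y. card (norming_pairs N P) = m)"

end

theory Submission
  imports Defs
begin

definition outer :: "real^'n \<Rightarrow> real^'n \<Rightarrow> real^'n^'n" where
  "outer y z = (\<chi> i j. y$i * z$j)"

lemma outer_mulv: "outer y z *v x = (z \<bullet> x) *\<^sub>R y"
  by (simp add: outer_def matrix_vector_mult_def inner_vec_def vec_eq_iff sum_distrib_left mult_ac)

lemma inner_mat_outer: "Q \<bullet> outer f x = f \<bullet> (Q *v x)"
  by (simp add: outer_def matrix_vector_mult_def inner_vec_def sum_distrib_left mult_ac)

lemma inner_outer: "outer a b \<bullet> outer c d = (a \<bullet> c) * (b \<bullet> d)"
  by (simp add: inner_mat_outer outer_mulv inner_commute)

lemma outer_scaleR: "outer (c *\<^sub>R y) z = c *\<^sub>R outer y z"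
  by (simp add: outer_def vec_eq_iff)

lemma outer_sum: "outer (\<Sum>i\<in>A. g i) z = (\<Sum>i\<in>A. outer (g i) z)"
  by (induction A rule: infinite_finite_induct) (auto simp: outer_def vec_eq_iff sum_distrib_right distrib_right)

lemma outer_zero: "outer 0 z = 0"
  by (simp add: outer_def vec_eq_iff)


lemma sum_mulv: "(\<Sum>i\<in>A. M i) *v x = (\<Sum>i\<in>A. M i *v x)"
  by (induction A rule: infinite_finite_induct) (auto simp: matrix_vector_mult_add_rdistrib)

lemma mulv_sum: "M *v (\<Sum>i\<in>A. v i) = (\<Sum>i\<in>A. M *v v i)"
  by (induction A rule: infinite_finite_induct) (auto simp: matrix_vector_right_distrib)

lemma mulv_scaleR_left: "(c *\<^sub>R A) *v x = c *\<^sub>R (A *v (x::real^'n))"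
  by (simp add: vec_eq_iff matrix_vector_mult_def sum_distrib_left mult_ac)

lemma mulv_scaleR_right: "A *v (c *\<^sub>R x) = c *\<^sub>R (A *v (x::real^'n))"
  by (simp add: vec_eq_iff matrix_vector_mult_def sum_distrib_left mult_ac)

lemma mulv_diff: "(A - B) *v x = A *v x - B *v (x::real^'n)"
  by (simp add: vec_eq_iff matrix_vector_mult_def sum_subtractf algebra_simps)

lemma mulv_add: "(A + B) *v x = A *v x + B *v (x::real^'n)"
  by (simp add: matrix_vector_mult_add_rdistrib)

definition onb :: "'a::euclidean_space set \<Rightarrow> 'a set \<Rightarrow> bool" where
  "onb S B \<longleftrightarrow> B \<subseteq> S \<and> pairwise orthogonal B \<and> (\<forall>x\<in>B. norm x = 1) \<and> independent B
     \<and> card B = dim S \<and> span B = S \<and> finite B"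

lemma onb_exists: "subspace S \<Longrightarrow> \<exists>B. onb S B"
  unfolding onb_def by (metis orthonormal_basis_subspace finiteI_independent)

lemma orth_expand:
  fixes x :: "'a::euclidean_space"
  assumes "onb S B" "x \<in> S"
  shows "x = (\<Sum>b\<in>B. (b \<bullet> x) *\<^sub>R b)"
proof -
  have fin: "finite B" and orth: "pairwise orthogonal B" and nb: "\<forall>x\<in>B. norm x = 1"
    and sp: "span B = S" using assms(1) by (auto simp: onb_def)
  have "x \<in> range (\<lambda>u. \<Sum>v\<in>B. u v *\<^sub>R v)" using assms(2) sp span_finite[OF fin] by simp
  then obtain u where u: "x = (\<Sum>b\<in>B. u b *\<^sub>R b)" by auto
  have "b' \<bullet> x = u b'" if "b' \<in> B" for b'
  proof -
    have "b' \<bullet> x = (\<Sum>b\<in>B. u b * (b' \<bullet> b))" by (simp add: u inner_sum_right)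
    also have "\<dots> = u b' * (b' \<bullet> b')"
    proof -
      have z: "\<forall>b\<in>B-{b'}. b' \<bullet> b = 0" using orth that by (auto simp: pairwise_def orthogonal_def)
      show ?thesis by (subst sum.remove[OF fin that]) (simp add: z)
    qed
    also have "b' \<bullet> b' = 1" using nb that by (simp add: dot_square_norm)
    finally show ?thesis by simp
  qed
  then show ?thesis by (simp add: u)
qed

definition ZZ :: "(real^'n) set \<Rightarrow> (real^'n) set" where
  "ZZ Y = {z. \<forall>y\<in>Y. z \<bullet> y = 0}"

definition VV :: "(real^'n) set \<Rightarrow> (real^'n^'n) set" where
  "VV Y = {D. (\<forall>x. D *v x \<in> Y) \<and> (\<forall>y\<in>Y. D *v y = 0)}"

lemma subspace_ZZ: "subspace (ZZ Y)"
  by (auto simp: subspace_def ZZ_def inner_add_left)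

context
  fixes Y :: "(real^'n) set"
  assumes Y: "subspace Y"
begin

lemma subspace_VV: "subspace (VV Y)"
  using Y by (auto simp: subspace_def VV_def matrix_vector_mult_add_rdistrib mulv_scaleR_left)

lemma decomp: "\<exists>y z. y \<in> Y \<and> z \<in> ZZ Y \<and> x = y + z"
proof -
  obtain y z where "y \<in> span Y" "\<And>w. w \<in> span Y \<Longrightarrow> orthogonal z w" "x = y + z"
    using orthogonal_subspace_decomp_exists[of Y x] by blast
  moreover have "span Y = Y" using Y by (simp add: span_eq_iff)
  ultimately have "y \<in> Y \<and> z \<in> ZZ Y \<and> x = y + z" by (auto simp: ZZ_def orthogonal_def)
  then show ?thesis by blast
qed

lemma Y_iff: "x \<in> Y \<longleftrightarrow> (\<forall>z\<in>ZZ Y. z \<bullet> x = 0)"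
proof
  assume "x \<in> Y" then show "\<forall>z\<in>ZZ Y. z \<bullet> x = 0" by (auto simp: ZZ_def)
next
  assume H: "\<forall>z\<in>ZZ Y. z \<bullet> x = 0"
  obtain y z where yz: "y \<in> Y" "z \<in> ZZ Y" "x = y + z" using decomp by blast
  have "z \<bullet> y = 0" using yz by (auto simp: ZZ_def)
  then have "z \<bullet> z = 0" using H yz by (auto simp: inner_add_right)
  then show "x \<in> Y" using yz by simp
qed

lemma dim_ZZ: "dim (ZZ Y) + dim Y = CARD('n)"
proof -
  have "dim {y \<in> UNIV. \<forall>x \<in> Y. orthogonal x y} + dim Y = dim (UNIV :: (real^'n) set)"
    by (rule dim_subspace_orthogonal_to_vectors) (use Y in auto)
  moreover have "{y \<in> UNIV. \<forall>x \<in> Y. orthogonal x y} = ZZ Y"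
    by (auto simp: ZZ_def orthogonal_def inner_commute)
  ultimately show ?thesis by simp
qed

lemma VV_expand:
  assumes "D \<in> VV Y" "onb (ZZ Y) BZ"
  shows "D *v x = (\<Sum>b\<in>BZ. (b \<bullet> x) *\<^sub>R (D *v b))"
proof -
  obtain y z where yz: "y \<in> Y" "z \<in> ZZ Y" "x = y + z" using decomp by blast
  have BZ: "BZ \<subseteq> ZZ Y" using assms(2) by (auto simp: onb_def)
  have "D *v x = D *v z" using yz assms(1) by (auto simp: VV_def matrix_vector_right_distrib)
  also have "\<dots> = D *v (\<Sum>b\<in>BZ. (b \<bullet> z) *\<^sub>R b)" using orth_expand[OF assms(2) yz(2)] by simp
  also have "\<dots> = (\<Sum>b\<in>BZ. (b \<bullet> z) *\<^sub>R (D *v b))"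
    by (simp add: mulv_sum mulv_scaleR_right)
  also have "\<dots> = (\<Sum>b\<in>BZ. (b \<bullet> x) *\<^sub>R (D *v b))"
  proof (rule sum.cong[OF refl])
    fix b assume "b \<in> BZ"
    then have "b \<bullet> y = 0" using BZ yz by (auto simp: ZZ_def)
    then show "(b \<bullet> z) *\<^sub>R (D *v b) = (b \<bullet> x) *\<^sub>R (D *v b)" using yz by (simp add: inner_add_right)
  qed
  finally show ?thesis .
qed

lemma VV_as_sum:
  assumes "D \<in> VV Y" "onb (ZZ Y) BZ"
  shows "D = (\<Sum>b\<in>BZ. outer (D *v b) b)"
  unfolding matrix_eq
proof
  fix x show "D *v x = (\<Sum>b\<in>BZ. outer (D *v b) b) *v x"
    unfolding sum_mulv outer_mulv by (rule VV_expand[OF assms])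
qed


lemma outer_in_VV: "y \<in> Y \<Longrightarrow> z \<in> ZZ Y \<Longrightarrow> outer y z \<in> VV Y"
  using Y by (auto simp: VV_def outer_mulv ZZ_def subspace_scale)

lemma dim_VV: "dim (VV Y) = dim Y * (CARD('n) - dim Y)"
proof -
  obtain BY where BY: "onb Y BY" using onb_exists[OF Y] by blast
  obtain BZ where BZ: "onb (ZZ Y) BZ" using onb_exists[OF subspace_ZZ] by blast
  define OU where "OU = (\<lambda>(y,z). outer y z) ` (BY \<times> BZ)"
  have BYs: "BY \<subseteq> Y" and BZs: "BZ \<subseteq> ZZ Y" and finY: "finite BY" and finZ: "finite BZ"
    using BY BZ by (auto simp: onb_def)
  have nY: "y \<bullet> y = 1" if "y \<in> BY" for y using BY that by (auto simp: onb_def dot_square_norm)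
  have nZ: "y \<bullet> y = 1" if "y \<in> BZ" for y using BZ that by (auto simp: onb_def dot_square_norm)
  have oY: "y \<bullet> y' = 0" if "y \<in> BY" "y' \<in> BY" "y \<noteq> y'" for y y'
    using BY that by (auto simp: onb_def pairwise_def orthogonal_def)
  have oZ: "y \<bullet> y' = 0" if "y \<in> BZ" "y' \<in> BZ" "y \<noteq> y'" for y y'
    using BZ that by (auto simp: onb_def pairwise_def orthogonal_def)
  have sub: "OU \<subseteq> VV Y" using BYs BZs outer_in_VV by (auto simp: OU_def)
  have inj: "inj_on (\<lambda>(y,z). outer y z) (BY \<times> BZ)"
  proof (rule inj_onI)
    fix p q assume p: "p \<in> BY \<times> BZ" and q: "q \<in> BY \<times> BZ"
      and e0: "(\<lambda>(y,z). outer y z) p = (\<lambda>(y,z). outer y z) q"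
    obtain y z where pyz: "p = (y,z)" by (cases p)
    obtain y' z' where qyz: "q = (y',z')" by (cases q)
    have a: "y \<in> BY" "z \<in> BZ" "y' \<in> BY" "z' \<in> BZ" "outer y z = outer y' z'"
      using p q e0 pyz qyz by auto
    have e: "outer y z \<bullet> outer y z = 1" using a nY nZ by (simp add: inner_outer)
    have "outer y z \<bullet> outer y' z' = 1" using e unfolding a(5) .
    then have pr: "(y \<bullet> y') * (z \<bullet> z') = 1" by (simp add: inner_outer)
    have "y = y' \<and> z = z'"
    proof (rule ccontr)
      assume "\<not> (y = y' \<and> z = z')"
      then have "y \<bullet> y' = 0 \<or> z \<bullet> z' = 0" using oY oZ a by blast
      then show False using pr by auto
    qed
    then show "p = q" using pyz qyz by simp
  qed
  have orth: "pairwise orthogonal OU"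
  proof (unfold pairwise_def, intro ballI impI)
    fix u v assume u: "u \<in> OU" and v: "v \<in> OU" and ne: "u \<noteq> v"
    obtain y z where yz: "y \<in> BY" "z \<in> BZ" "u = outer y z" using u by (auto simp: OU_def)
    obtain y' z' where yz': "y' \<in> BY" "z' \<in> BZ" "v = outer y' z'" using v by (auto simp: OU_def)
    have "y \<noteq> y' \<or> z \<noteq> z'" using ne yz yz' by auto
    then have "y \<bullet> y' = 0 \<or> z \<bullet> z' = 0" using oY oZ yz yz' by blast
    then show "orthogonal u v" using yz yz' by (auto simp: orthogonal_def inner_outer)
  qed
  have n0: "0 \<notin> OU"
  proof
    assume "0 \<in> OU"
    then obtain y z where a: "y \<in> BY" "z \<in> BZ" "outer y z = 0" by (auto simp: OU_def)
    have "outer y z \<bullet> outer y z = 1" using a(1,2) nY nZ by (simp add: inner_outer)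
    then show False using a(3) by simp
  qed
  have ind: "independent OU" by (rule pairwise_orthogonal_independent[OF orth n0])
  have spn: "VV Y \<subseteq> span OU"
  proof
    fix D assume D: "D \<in> VV Y"
    have "D = (\<Sum>b\<in>BZ. outer (D *v b) b)" by (rule VV_as_sum[OF D BZ])
    also have "\<dots> \<in> span OU"
    proof (rule span_sum)
      fix b assume b: "b \<in> BZ"
      define v where "v = D *v b"
      have "v \<in> Y" using D by (auto simp: VV_def v_def)
      then have eq: "v = (\<Sum>y\<in>BY. (y \<bullet> v) *\<^sub>R y)" by (rule orth_expand[OF BY])
      have "outer (D *v b) b = outer (\<Sum>y\<in>BY. (y \<bullet> v) *\<^sub>R y) b"
        unfolding v_def[symmetric] by (rule arg_cong[where f="\<lambda>w. outer w b", OF eq])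
      also have "\<dots> = (\<Sum>y\<in>BY. (y \<bullet> v) *\<^sub>R outer y b)" by (simp add: outer_sum outer_scaleR)
      also have "\<dots> \<in> span OU"
        by (rule span_sum, rule span_mul, rule span_base) (use b in \<open>auto simp: OU_def\<close>)
      finally show "outer (D *v b) b \<in> span OU" .
    qed
    finally show "D \<in> span OU" .
  qed
  have "card OU = dim (VV Y)" by (rule basis_card_eq_dim[OF sub spn ind])
  moreover have "card OU = card BY * card BZ"
    unfolding OU_def by (simp add: card_image[OF inj] card_cartesian_product)
  moreover have "card BY = dim Y" "card BZ = dim (ZZ Y)" using BY BZ by (auto simp: onb_def)
  moreover have "dim (ZZ Y) = CARD('n) - dim Y" using dim_ZZ by linarith
  ultimately show ?thesis by simp
qed


lemma proj_exists: "\<exists>P. is_projection P Y"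
proof -
  obtain BY where BY: "onb Y BY" using onb_exists[OF Y] by blast
  have BYs: "BY \<subseteq> Y" using BY by (auto simp: onb_def)
  define P where "P = (\<Sum>b\<in>BY. outer b b)"
  have Px: "P *v x = (\<Sum>b\<in>BY. (b \<bullet> x) *\<^sub>R b)" for x
    by (simp add: P_def sum_mulv outer_mulv)
  have "P *v x \<in> Y" for x
    unfolding Px using BYs Y by (auto intro!: subspace_sum subspace_scale)
  moreover have "P *v y = y" if "y \<in> Y" for y
    unfolding Px using orth_expand[OF BY that] by simp
  ultimately show ?thesis by (auto simp: is_projection_def)
qed

lemma proj_iff: "is_projection P Y \<Longrightarrow> is_projection Q Y \<longleftrightarrow> Q - P \<in> VV Y"
proof
  assume P: "is_projection P Y" and Q: "is_projection Q Y"
  show "Q - P \<in> VV Y" using P Q Y by (auto simp: is_projection_def VV_def mulv_diff subspace_diff)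
next
  assume P: "is_projection P Y" and D: "Q - P \<in> VV Y"
  have "Q = P + (Q - P)" by simp
  then have "Q *v x = P *v x + (Q - P) *v x" for x by (metis mulv_add)
  then show "is_projection Q Y" using P D Y by (auto simp: is_projection_def VV_def subspace_add)
qed

lemma cm_equiv:
  "(\<forall>y\<in>Y. (\<Sum>i\<in>A. (c i * (f i \<bullet> y)) *\<^sub>R x i) \<in> Y) \<longleftrightarrow>
   (\<forall>D\<in>VV Y. (\<Sum>i\<in>A. c i * (f i \<bullet> (D *v x i))) = 0)"
proof
  assume H: "\<forall>y\<in>Y. (\<Sum>i\<in>A. (c i * (f i \<bullet> y)) *\<^sub>R x i) \<in> Y"
  obtain BZ where BZ: "onb (ZZ Y) BZ" using onb_exists[OF subspace_ZZ] by blast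
  have BZs: "BZ \<subseteq> ZZ Y" using BZ by (auto simp: onb_def)
  show "\<forall>D\<in>VV Y. (\<Sum>i\<in>A. c i * (f i \<bullet> (D *v x i))) = 0"
  proof
    fix D assume D: "D \<in> VV Y"
    have "(\<Sum>i\<in>A. c i * (f i \<bullet> (D *v x i))) = (\<Sum>i\<in>A. c i * (\<Sum>b\<in>BZ. (b \<bullet> x i) * (f i \<bullet> (D *v b))))"
    proof -
      have ex: "\<And>i. D *v x i = (\<Sum>b\<in>BZ. (b \<bullet> x i) *\<^sub>R (D *v b))" by (rule VV_expand[OF D BZ])
      show ?thesis by (simp only: ex inner_sum_right inner_scaleR_right)
    qed
    also have "\<dots> = (\<Sum>i\<in>A. \<Sum>b\<in>BZ. c i * ((b \<bullet> x i) * (f i \<bullet> (D *v b))))"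
      by (simp add: sum_distrib_left)
    also have "\<dots> = (\<Sum>b\<in>BZ. \<Sum>i\<in>A. c i * ((b \<bullet> x i) * (f i \<bullet> (D *v b))))"
      by (rule sum.swap)
    also have "\<dots> = (\<Sum>b\<in>BZ. b \<bullet> (\<Sum>i\<in>A. (c i * (f i \<bullet> (D *v b))) *\<^sub>R x i))"
      by (simp add: inner_sum_right mult_ac)
    also have "\<dots> = 0"
    proof (rule sum.neutral, rule ballI)
      fix b assume b: "b \<in> BZ"
      have "D *v b \<in> Y" using D by (auto simp: VV_def)
      then have "(\<Sum>i\<in>A. (c i * (f i \<bullet> (D *v b))) *\<^sub>R x i) \<in> Y" using H by blast
      then show "b \<bullet> (\<Sum>i\<in>A. (c i * (f i \<bullet> (D *v b))) *\<^sub>R x i) = 0" using b BZs by (auto simp: ZZ_def)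
    qed
    finally show "(\<Sum>i\<in>A. c i * (f i \<bullet> (D *v x i))) = 0" .
  qed
next
  assume H: "\<forall>D\<in>VV Y. (\<Sum>i\<in>A. c i * (f i \<bullet> (D *v x i))) = 0"
  show "\<forall>y\<in>Y. (\<Sum>i\<in>A. (c i * (f i \<bullet> y)) *\<^sub>R x i) \<in> Y"
  proof (intro ballI, subst Y_iff, intro ballI)
    fix y z assume y: "y \<in> Y" and z: "z \<in> ZZ Y"
    have "0 = (\<Sum>i\<in>A. c i * (f i \<bullet> (outer y z *v x i)))" using H outer_in_VV[OF y z] by simp
    also have "\<dots> = z \<bullet> (\<Sum>i\<in>A. (c i * (f i \<bullet> y)) *\<^sub>R x i)"
      by (simp add: outer_mulv inner_sum_right mult_ac)
    finally show "z \<bullet> (\<Sum>i\<in>A. (c i * (f i \<bullet> y)) *\<^sub>R x i) = 0" by simp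
  qed
qed

end



definition EB :: "(real^'n \<Rightarrow> real) \<Rightarrow> (real^'n) set" where
  "EB N = {x. x extreme_point_of (unit_ball N)}"
definition ED :: "(real^'n \<Rightarrow> real) \<Rightarrow> (real^'n) set" where
  "ED N = {x. x extreme_point_of (dual_ball N)}"
definition PR :: "(real^'n \<Rightarrow> real) \<Rightarrow> ((real^'n) \<times> (real^'n)) set" where
  "PR N = EB N \<times> ED N"
definition psi :: "(real^'n) \<times> (real^'n) \<Rightarrow> real^'n^'n \<Rightarrow> real" where
  "psi p Q = snd p \<bullet> (Q *v fst p)"

lemma psi_add: "psi p (A + B) = psi p A + psi p B"
  by (simp add: psi_def mulv_add inner_add_right)
lemma psi_diff: "psi p (A - B) = psi p A - psi p B"
  by (simp add: psi_def mulv_diff inner_diff_right)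
lemma psi_scale: "psi p (c *\<^sub>R A) = c * psi p A"
  by (simp add: psi_def mulv_scaleR_left)
lemma psi_inner: "psi p Q = Q \<bullet> outer (snd p) (fst p)"
  by (simp add: psi_def inner_mat_outer)

lemma hull_le_Max:
  fixes S :: "'a::real_inner set"
  assumes "finite S" "S \<noteq> {}" "u \<in> convex hull S"
  shows "z \<bullet> u \<le> Max ((\<lambda>s. z \<bullet> s) ` S)"
proof -
  have "convex hull S \<subseteq> {u. z \<bullet> u \<le> Max ((\<lambda>s. z \<bullet> s) ` S)}"
    by (rule hull_minimal) (use assms in \<open>auto intro: convex_halfspace_le\<close>)
  then show ?thesis using assms by auto
qed

context
  fixes N :: "real^'n \<Rightarrow> real"
  assumes pN: "polyhedral N"
begin

lemma isn: "is_norm N" using pN by (simp add: polyhedral_def)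

lemma Nscale: "N (c *\<^sub>R x) = \<bar>c\<bar> * N x" using isn by (simp add: is_norm_def)
lemma Ntri: "N (x + y) \<le> N x + N y" using isn by (simp add: is_norm_def)
lemma N0: "N 0 = 0" using isn by (simp add: is_norm_def)
lemma Nnn: "0 \<le> N x" using isn by (simp add: is_norm_def)
lemma Npos: "x \<noteq> 0 \<Longrightarrow> 0 < N x" using isn by (metis is_norm_def order_le_less)
lemma Nminus: "N (- x) = N x" using Nscale[of "-1" x] by simp

lemma N_sum: "N (\<Sum>i\<in>A. g i) \<le> (\<Sum>i\<in>A. N (g i))"
proof (induction A rule: infinite_finite_induct)
  case (insert a A)
  then show ?case using Ntri[of "g a" "sum g A"] by simp
qed (auto simp: N0)

lemma Nnormalize: "x \<noteq> 0 \<Longrightarrow> N ((1 / N x) *\<^sub>R x) = 1"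
  using Npos[of x] by (simp add: Nscale)

lemma N_le_norm: "\<exists>C>0. \<forall>x. N x \<le> C * norm x"
proof -
  define C where "C = 1 + (\<Sum>i\<in>UNIV. N (axis i (1::real) :: real^'n))"
  have C0: "C > 0" unfolding C_def using Nnn by (simp add: add_pos_nonneg sum_nonneg)
  have "N x \<le> C * norm x" for x
  proof -
    have "N x = N (\<Sum>i\<in>UNIV. (x$i) *\<^sub>R axis i 1)"
      using basis_expansion[of x] by (simp add: scalar_mult_eq_scaleR)
    also have "\<dots> \<le> (\<Sum>i\<in>UNIV. N ((x$i) *\<^sub>R axis i 1))" by (rule N_sum)
    also have "\<dots> = (\<Sum>i\<in>UNIV. \<bar>x$i\<bar> * N (axis i 1))" by (simp add: Nscale)
    also have "\<dots> \<le> (\<Sum>i\<in>UNIV. norm x * N (axis i 1))"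
      by (rule sum_mono, rule mult_right_mono) (auto simp: component_le_norm_cart Nnn)
    also have "\<dots> \<le> C * norm x" unfolding C_def by (simp add: sum_distrib_left[symmetric] algebra_simps)
    finally show ?thesis .
  qed
  then show ?thesis using C0 by blast
qed

lemma in_B: "x \<in> unit_ball N \<longleftrightarrow> N x \<le> 1" by (simp add: unit_ball_def)

lemma B_polytope: "polytope (unit_ball N)" using pN by (simp add: polyhedral_def)
lemma B_compact: "compact (unit_ball N)" by (rule polytope_imp_compact[OF B_polytope])
lemma B_convex: "convex (unit_ball N)" by (rule polytope_imp_convex[OF B_polytope])

lemma norm_le_N: "\<exists>R>0. \<forall>x. norm x \<le> R * N x"
proof -
  obtain R where R: "R > 0" "\<forall>x\<in>unit_ball N. norm x \<le> R"
    using compact_imp_bounded[OF B_compact] by (auto simp: bounded_pos)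
  have "norm x \<le> R * N x" for x
  proof (cases "x = 0")
    case False
    then have "(1 / N x) *\<^sub>R x \<in> unit_ball N" by (simp add: in_B Nnormalize)
    then have "norm ((1 / N x) *\<^sub>R x) \<le> R" using R by blast
    then show ?thesis using Npos[OF False] by (simp add: field_simps)
  qed (simp add: N0)
  then show ?thesis using R by blast
qed

lemma EB_finite: "finite (EB N)"
  unfolding EB_def by (rule finite_polyhedron_extreme_points[OF polytope_imp_polyhedron[OF B_polytope]])

lemma B_hull: "unit_ball N = convex hull (EB N)"
  unfolding EB_def by (rule Krein_Milman_Minkowski[OF B_compact B_convex])

lemma EB_sub: "EB N \<subseteq> unit_ball N" by (auto simp: EB_def extreme_point_of_def)

lemma EB_ne: "EB N \<noteq> {}"
proof
  assume "EB N = {}"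
  then have "unit_ball N = {}" using B_hull by simp
  moreover have "0 \<in> unit_ball N" using N0 by (simp add: unit_ball_def)
  ultimately show False by simp
qed

lemma D_le: "f \<in> dual_ball N \<Longrightarrow> f \<bullet> z \<le> N z"
proof (cases "z = 0")
  case False
  assume f: "f \<in> dual_ball N"
  have d: "\<forall>x. N x \<le> 1 \<longrightarrow> f \<bullet> x \<le> 1" using f by (simp add: dual_ball_def)
  have "f \<bullet> ((1 / N z) *\<^sub>R z) \<le> 1" by (rule d[rule_format]) (simp add: Nnormalize[OF False])
  then show ?thesis using Npos[OF False] by (simp add: field_simps)
qed (simp add: N0)

lemma D_attain: "\<exists>f\<in>dual_ball N. f \<bullet> z = N z"
proof (cases "z = 0")
  case True
  have "0 \<in> dual_ball N" by (simp add: dual_ball_def)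
  then show ?thesis using True N0 by (intro bexI[of _ 0]) auto
next
  case False
  define w where "w = (1 / N z) *\<^sub>R z"
  have Nw: "N w = 1" unfolding w_def by (rule Nnormalize[OF False])
  obtain F where F: "finite F" "unit_ball N = \<Inter>F" "\<forall>h\<in>F. \<exists>a b. a \<noteq> 0 \<and> h = {x. a \<bullet> x \<le> b}"
    using polytope_imp_polyhedron[OF B_polytope] by (auto simp: polyhedron_def)
  have "\<exists>h\<in>F. \<exists>a b. a \<noteq> 0 \<and> h = {x. a \<bullet> x \<le> b} \<and> a \<bullet> w = b"
  proof (rule ccontr)
    assume nt: "\<not> ?thesis"
    have "\<forall>h\<in>F. eventually (\<lambda>t. t *\<^sub>R w \<in> h) (at_right (1::real))"
    proof
      fix h assume h: "h \<in> F"
      then obtain a b where ab: "a \<noteq> 0" "h = {x. a \<bullet> x \<le> b}" using F by blast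
      have "w \<in> h" using h F Nw by (auto simp: unit_ball_def)
      then have "a \<bullet> w < b" using nt h ab by (auto simp: order_le_less)
      moreover have "((\<lambda>t. t * (a \<bullet> w)) \<longlongrightarrow> 1 * (a \<bullet> w)) (at_right 1)"
        by (intro tendsto_intros)
      ultimately have "eventually (\<lambda>t. t * (a \<bullet> w) < b) (at_right 1)"
        by (simp add: order_tendstoD(2))
      then show "eventually (\<lambda>t. t *\<^sub>R w \<in> h) (at_right (1::real))"
        by eventually_elim (simp add: ab)
    qed
    then have "eventually (\<lambda>t. \<forall>h\<in>F. t *\<^sub>R w \<in> h) (at_right (1::real))"
      by (rule eventually_ball_finite[OF F(1)])
    moreover have "eventually (\<lambda>t. 1 < t) (at_right (1::real))" by (rule eventually_at_right_less)
    ultimately have "eventually (\<lambda>t. False) (at_right (1::real))"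
    proof eventually_elim
      case (elim t)
      then have "t *\<^sub>R w \<in> unit_ball N" using F(2) by blast
      then have "\<bar>t\<bar> * N w \<le> 1" by (simp add: in_B Nscale)
      then show False using elim Nw by simp
    qed
    then show False by (simp add: eventually_False)
  qed
  then obtain a b where ab: "a \<noteq> 0" "{x. a \<bullet> x \<le> b} \<in> F" "a \<bullet> w = b" by blast
  have Bh: "\<And>x. N x \<le> 1 \<Longrightarrow> a \<bullet> x \<le> b" using F(2) ab(2) by (auto simp: unit_ball_def)
  have "a \<bullet> ((1 / N a) *\<^sub>R a) \<le> b" by (rule Bh) (simp add: Nnormalize[OF ab(1)])
  moreover have "0 < a \<bullet> ((1 / N a) *\<^sub>R a)" using ab(1) Npos[OF ab(1)] by simp
  ultimately have b0: "b > 0" by simp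
  define f where "f = (1 / b) *\<^sub>R a"
  have "f \<in> dual_ball N" using Bh b0 by (auto simp: dual_ball_def f_def field_simps)
  moreover have "f \<bullet> w = 1" using ab(3) b0 by (simp add: f_def)
  then have "f \<bullet> z = N z" using Npos[OF False] by (simp add: w_def field_simps)
  ultimately show ?thesis by blast
qed

lemma D_eq: "dual_ball N = {u. \<forall>x\<in>EB N. x \<bullet> u \<le> 1}"
proof
  show "dual_ball N \<subseteq> {u. \<forall>x\<in>EB N. x \<bullet> u \<le> 1}"
    using EB_sub by (auto simp: dual_ball_def unit_ball_def inner_commute)
next
  show "{u. \<forall>x\<in>EB N. x \<bullet> u \<le> 1} \<subseteq> dual_ball N"
  proof
    fix u assume u: "u \<in> {u. \<forall>x\<in>EB N. x \<bullet> u \<le> 1}"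
    have "convex hull (EB N) \<subseteq> {x. u \<bullet> x \<le> 1}"
    proof (rule hull_minimal)
      show "EB N \<subseteq> {x. u \<bullet> x \<le> 1}" using u by (auto simp: inner_commute)
      show "convex {x. u \<bullet> x \<le> 1}" by (rule convex_halfspace_le)
    qed
    then show "u \<in> dual_ball N" using B_hull by (auto simp: dual_ball_def unit_ball_def)
  qed
qed

lemma D_polyhedron: "polyhedron (dual_ball N)"
proof -
  have "dual_ball N = \<Inter> ((\<lambda>x. {u. x \<bullet> u \<le> 1}) ` EB N)" using D_eq by auto
  then show ?thesis using EB_finite by (auto intro: polyhedron_halfspace_le)
qed

lemma D_bounded: "bounded (dual_ball N)"
proof -
  obtain C where C: "C > 0" "\<forall>x. N x \<le> C * norm x" using N_le_norm by blast
  have "norm u \<le> C" if u: "u \<in> dual_ball N" for u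
  proof (cases "u = 0")
    case False
    define x where "x = (1 / (C * norm u)) *\<^sub>R u"
    have "N x \<le> C * norm x" using C by blast
    also have "\<dots> = 1" using C False by (simp add: x_def)
    finally have "u \<bullet> x \<le> 1" using u by (auto simp: dual_ball_def)
    then have "norm u * norm u / (C * norm u) \<le> 1" by (simp add: x_def dot_square_norm power2_eq_square)
    then show ?thesis using C False by (simp add: field_simps)
  qed (use C in simp)
  then show ?thesis unfolding bounded_iff by blast
qed

lemma D_compact: "compact (dual_ball N)"
  using D_bounded polyhedron_imp_closed[OF D_polyhedron] by (simp add: compact_eq_bounded_closed)

lemma ED_finite: "finite (ED N)"
  unfolding ED_def by (rule finite_polyhedron_extreme_points[OF D_polyhedron])

lemma D_hull: "dual_ball N = convex hull (ED N)"
  unfolding ED_def by (rule Krein_Milman_Minkowski[OF D_compact polyhedron_imp_convex[OF D_polyhedron]])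

lemma ED_sub: "ED N \<subseteq> dual_ball N" by (auto simp: ED_def extreme_point_of_def)

lemma ED_ne: "ED N \<noteq> {}"
proof
  assume "ED N = {}"
  then have "dual_ball N = {}" using D_hull by simp
  moreover have "0 \<in> dual_ball N" by (simp add: dual_ball_def)
  ultimately show False by simp
qed

lemma N_Max: "N z = Max ((\<lambda>f. f \<bullet> z) ` ED N)"
proof (rule antisym)
  obtain f where f: "f \<in> dual_ball N" "f \<bullet> z = N z" using D_attain by blast
  have "z \<bullet> f \<le> Max ((\<lambda>s. z \<bullet> s) ` ED N)"
    by (rule hull_le_Max[OF ED_finite ED_ne]) (use f D_hull in auto)
  then show "N z \<le> Max ((\<lambda>f. f \<bullet> z) ` ED N)" using f by (simp add: inner_commute)
next
  show "Max ((\<lambda>f. f \<bullet> z) ` ED N) \<le> N z"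
    using ED_finite ED_ne ED_sub D_le by auto
qed

lemma PR_finite: "finite (PR N)" using EB_finite ED_finite by (simp add: PR_def)
lemma PR_ne: "PR N \<noteq> {}" using EB_ne ED_ne by (simp add: PR_def)

lemma psi_le_N: "p \<in> PR N \<Longrightarrow> psi p Q \<le> N (Q *v fst p)"
  using ED_sub D_le by (auto simp: PR_def psi_def)

lemma N_le_Max: "N x \<le> 1 \<Longrightarrow> N (Q *v x) \<le> Max ((\<lambda>p. psi p Q) ` PR N)"
proof -
  assume x: "N x \<le> 1"
  define M where "M = Max ((\<lambda>p. psi p Q) ` PR N)"
  have "Max ((\<lambda>f. f \<bullet> (Q *v x)) ` ED N) \<in> (\<lambda>f. f \<bullet> (Q *v x)) ` ED N"
    by (rule Max_in) (use ED_finite ED_ne in auto)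
  then obtain f where f: "f \<in> ED N" "f \<bullet> (Q *v x) = N (Q *v x)"
    using N_Max[of "Q *v x"] by auto
  have "convex hull (EB N) \<subseteq> {y. (f v* Q) \<bullet> y \<le> M}"
  proof (rule hull_minimal)
    show "EB N \<subseteq> {y. (f v* Q) \<bullet> y \<le> M}"
    proof
      fix y assume "y \<in> EB N"
      then have "(y, f) \<in> PR N" using f by (simp add: PR_def)
      then have "psi (y, f) Q \<le> M" unfolding M_def using PR_finite by auto
      then show "y \<in> {y. (f v* Q) \<bullet> y \<le> M}" by (simp add: psi_def dot_lmul_matrix)
    qed
  qed (rule convex_halfspace_le)
  then have "(f v* Q) \<bullet> x \<le> M" using x B_hull by (auto simp: unit_ball_def)
  then show ?thesis using f by (simp add: dot_lmul_matrix M_def)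
qed

lemma op_norm_Max: "op_norm N Q = Max ((\<lambda>p. psi p Q) ` PR N)"
proof -
  define M where "M = Max ((\<lambda>p. psi p Q) ` PR N)"
  have "M \<in> (\<lambda>p. psi p Q) ` PR N" unfolding M_def
    by (rule Max_in) (use PR_finite PR_ne in auto)
  then obtain p where p: "p \<in> PR N" "psi p Q = M" by auto
  have x1: "N (fst p) \<le> 1" using p EB_sub by (auto simp: PR_def unit_ball_def)
  have "M \<le> N (Q *v fst p)" using psi_le_N[OF p(1), of Q] p(2) by simp
  moreover have "N (Q *v fst p) \<le> M" using N_le_Max[OF x1] by (simp add: M_def)
  ultimately have eq: "N (Q *v fst p) = M" by simp
  show ?thesis unfolding op_norm_def M_def[symmetric]
  proof (rule cSup_eq_maximum)
    show "M \<in> {N (Q *v x) |x. N x \<le> 1}" using eq x1 by force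
  next
    fix y assume "y \<in> {N (Q *v x) |x. N x \<le> 1}"
    then show "y \<le> M" using N_le_Max by (auto simp: M_def)
  qed
qed

lemma N_le_op_norm: "N x \<le> 1 \<Longrightarrow> N (Q *v x) \<le> op_norm N Q"
  using N_le_Max op_norm_Max by simp

lemma psi_le_op_norm: "p \<in> PR N \<Longrightarrow> psi p Q \<le> op_norm N Q"
  unfolding op_norm_Max using PR_finite by auto

lemma norming_pairs_eq: "norming_pairs N P = {p \<in> PR N. psi p P = op_norm N P}"
  by (auto simp: norming_pairs_def PR_def EB_def ED_def psi_def)

lemma norming_pairs_finite: "finite (norming_pairs N P)"
  unfolding norming_pairs_eq using PR_finite by simp

end



lemma cont_Max:
  fixes g :: "'a \<Rightarrow> 'b::topological_space \<Rightarrow> real"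
  assumes "finite A" "A \<noteq> {}" "\<And>a. a \<in> A \<Longrightarrow> continuous_on S (g a)"
  shows "continuous_on S (\<lambda>x. Max ((\<lambda>a. g a x) ` A))"
  using assms
proof (induction A rule: finite_ne_induct)
  case (singleton a)
  then show ?case by simp
next
  case (insert a F)
  have "continuous_on S (\<lambda>x. max (g a x) (Max ((\<lambda>a. g a x) ` F)))"
    using insert by (intro continuous_on_max) auto
  moreover have "max (g a x) (Max ((\<lambda>a. g a x) ` F)) = Max ((\<lambda>a. g a x) ` insert a F)" for x
    using insert by (simp add: Max_insert)
  ultimately show ?case by simp
qed

definition gP :: "(real^'n) set \<Rightarrow> real^'n^'n \<Rightarrow> real^'n^'n" where
  "gP Y w = (SOME g. g \<in> VV Y \<and> (\<forall>D\<in>VV Y. D \<bullet> g = D \<bullet> w))"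

definition gp :: "(real^'n) set \<Rightarrow> (real^'n) \<times> (real^'n) \<Rightarrow> real^'n^'n" where
  "gp Y p = gP Y (outer (snd p) (fst p))"

lemma gP_prop:
  assumes Y: "subspace Y"
  shows "gP Y w \<in> VV Y \<and> (\<forall>D\<in>VV Y. D \<bullet> gP Y w = D \<bullet> w)"
proof -
  obtain y z where yz: "y \<in> span (VV Y)" "\<And>v. v \<in> span (VV Y) \<Longrightarrow> orthogonal z v" "w = y + z"
    using orthogonal_subspace_decomp_exists[of "VV Y" w] by blast
  have sp: "span (VV Y) = VV Y" using subspace_VV[OF Y] by (simp add: span_eq_iff)
  have "y \<in> VV Y \<and> (\<forall>D\<in>VV Y. D \<bullet> y = D \<bullet> w)"
    using yz sp by (auto simp: orthogonal_def inner_add_right inner_commute)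
  then show ?thesis unfolding gP_def by (rule someI)
qed

lemma gp_VV: assumes "subspace Y" shows "gp Y p \<in> VV Y"
  using gP_prop[OF assms] unfolding gp_def by blast

lemma psi_gp: assumes Y: "subspace Y" and D: "D \<in> VV Y" shows "psi p D = D \<bullet> gp Y p"
proof -
  have "D \<bullet> gP Y (outer (snd p) (fst p)) = D \<bullet> outer (snd p) (fst p)" using gP_prop[OF Y] D by blast
  then show ?thesis by (simp add: gp_def psi_inner)
qed

context
  fixes N :: "real^'n \<Rightarrow> real" and Y :: "(real^'n) set"
  assumes pN: "polyhedral N" and Y: "subspace Y"
begin

lemma psi_cont: "continuous_on S (psi p)"
  unfolding psi_inner by (intro continuous_intros)

lemma opn_cont: "continuous_on S (op_norm N)"
proof -
  have "continuous_on S (\<lambda>Q. Max ((\<lambda>p. psi p Q) ` PR N))"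
    by (rule cont_Max[OF PR_finite[OF pN] PR_ne[OF pN] psi_cont])
  then show ?thesis using op_norm_Max[OF pN] by simp
qed

lemma opn_nonneg: "0 \<le> op_norm N Q"
  using N_le_op_norm[OF pN, of 0 Q] N0[OF pN] by simp

lemma sublevel_bounded: "bounded {Q. op_norm N Q \<le> c}"
proof -
  obtain C where C: "C > 0" "\<forall>x. N x \<le> C * norm x" using N_le_norm[OF pN] by blast
  obtain R where R: "R > 0" "\<forall>x. norm x \<le> R * N x" using norm_le_N[OF pN] by blast
  have "norm Q \<le> of_nat (CARD('n) * CARD('n)) * (C * R * c)" if Q: "op_norm N Q \<le> c" for Q
  proof -
    have ent: "\<bar>Q$i$j\<bar> \<le> C * R * c" for i j
    proof -
      define x :: "real^'n" where "x = (1 / C) *\<^sub>R axis j 1"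
      have "N x \<le> C * norm x" using C by blast
      also have "\<dots> = 1" using C by (simp add: x_def)
      finally have "N (Q *v x) \<le> c" using N_le_op_norm[OF pN, of x Q] Q by simp
      then have "R * N (Q *v x) \<le> R * c" using R(1) by (simp add: mult_left_mono)
      moreover have "norm (Q *v x) \<le> R * N (Q *v x)" using R(2) by blast
      ultimately have "norm (Q *v x) \<le> R * c" by linarith
      moreover have "Q *v x = (1 / C) *\<^sub>R (Q *v axis j 1)" by (simp add: x_def mulv_scaleR_right)
      ultimately have "norm (Q *v axis j 1) \<le> C * R * c" using C(1)
        by (simp add: field_simps)
      moreover have "\<bar>(Q *v axis j 1)$i\<bar> \<le> norm (Q *v axis j 1)" by (rule component_le_norm_cart)
      moreover have "(Q *v axis j 1)$i = Q$i$j" by (simp add: matrix_vector_mult_basis column_def)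
      ultimately show ?thesis by simp
    qed
    have "norm Q \<le> (\<Sum>i\<in>UNIV. norm (Q$i))"
      unfolding norm_vec_def by (rule L2_set_le_sum) simp
    also have "\<dots> \<le> (\<Sum>i\<in>(UNIV::'n set). \<Sum>j\<in>(UNIV::'n set). \<bar>Q$i$j\<bar>)"
      by (rule sum_mono, rule norm_le_l1_cart)
    also have "\<dots> \<le> (\<Sum>i\<in>(UNIV::'n set). \<Sum>j\<in>(UNIV::'n set). C * R * c)"
      by (intro sum_mono ent)
    also have "\<dots> = of_nat (CARD('n) * CARD('n)) * (C * R * c)" by simp
    finally show ?thesis .
  qed
  then show ?thesis unfolding bounded_iff by blast
qed

lemma minproj: "\<exists>Q. is_projection Q Y \<and> (\<forall>P. is_projection P Y \<longrightarrow> op_norm N Q \<le> op_norm N P)"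
proof -
  obtain P0 where P0: "is_projection P0 Y" using proj_exists[OF Y] by blast
  have Pi: "{P. is_projection P Y} = (+) P0 ` VV Y"
  proof
    show "{P. is_projection P Y} \<subseteq> (+) P0 ` VV Y"
    proof
      fix P assume "P \<in> {P. is_projection P Y}"
      then have "P - P0 \<in> VV Y" using proj_iff[OF Y P0] by simp
      then show "P \<in> (+) P0 ` VV Y" by (intro image_eqI[of _ _ "P - P0"]) auto
    qed
  next
    show "(+) P0 ` VV Y \<subseteq> {P. is_projection P Y}"
    proof
      fix Q assume "Q \<in> (+) P0 ` VV Y"
      then obtain D where D: "D \<in> VV Y" "Q = P0 + D" by auto
      then have "Q - P0 \<in> VV Y" by simp
      then show "Q \<in> {P. is_projection P Y}" using proj_iff[OF Y P0] by simp
    qed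
  qed
  define c where "c = op_norm N P0"
  define K where "K = {P. is_projection P Y} \<inter> {Q. op_norm N Q \<le> c}"
  have "closed {P. is_projection P Y}"
    unfolding Pi by (rule closed_translation[OF closed_subspace[OF subspace_VV[OF Y]]])
  moreover have "closed {Q. op_norm N Q \<le> c}"
    by (rule closed_Collect_le[OF opn_cont continuous_on_const])
  ultimately have "closed K" unfolding K_def by auto
  moreover have "bounded K" unfolding K_def by (rule bounded_subset[OF sublevel_bounded]) auto
  ultimately have cK: "compact K" by (simp add: compact_eq_bounded_closed)
  have "K \<noteq> {}" using P0 by (auto simp: K_def c_def)
  then obtain Q where Q: "Q \<in> K" "\<forall>P\<in>K. op_norm N Q \<le> op_norm N P"
    using continuous_attains_inf[OF cK _ opn_cont] by blast
  have "op_norm N Q \<le> op_norm N P" if "is_projection P Y" for P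
  proof (cases "P \<in> K")
    case False
    then have "c < op_norm N P" using that by (auto simp: K_def)
    moreover have "op_norm N Q \<le> c" using Q by (auto simp: K_def)
    ultimately show ?thesis by simp
  qed (use Q in auto)
  then show ?thesis using Q by (auto simp: K_def)
qed

lemma pc_le: "is_projection P Y \<Longrightarrow> proj_const N Y \<le> op_norm N P"
proof -
  assume P: "is_projection P Y"
  obtain Q where Q: "is_projection Q Y" "\<forall>P. is_projection P Y \<longrightarrow> op_norm N Q \<le> op_norm N P"
    using minproj by blast
  have "proj_const N Y = op_norm N Q" unfolding proj_const_def
    by (rule cInf_eq_minimum) (use Q in auto)
  then show ?thesis using Q P by simp
qed

lemma minP_ne: "\<exists>Q. Q \<in> min_projections N Y"
proof -
  obtain Q where Q: "is_projection Q Y" "\<forall>P. is_projection P Y \<longrightarrow> op_norm N Q \<le> op_norm N P"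
    using minproj by blast
  have "proj_const N Y = op_norm N Q" unfolding proj_const_def
    by (rule cInf_eq_minimum) (use Q in auto)
  then show ?thesis using Q by (auto simp: min_projections_def)
qed

lemma NP_eq: "P \<in> min_projections N Y \<Longrightarrow> norming_pairs N P = {p \<in> PR N. psi p P = proj_const N Y}"
  using norming_pairs_eq[OF pN] by (simp add: min_projections_def)

lemma margin:
  assumes P: "P \<in> min_projections N Y"
  shows "\<exists>\<rho>>0. \<forall>D. norm D < \<rho> \<longrightarrow> (\<forall>p\<in>PR N - norming_pairs N P. psi p (P + D) < proj_const N Y)"
proof -
  have "\<forall>p\<in>PR N - norming_pairs N P. eventually (\<lambda>D. psi p (P + D) < proj_const N Y) (nhds 0)"
  proof
    fix p assume p: "p \<in> PR N - norming_pairs N P"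
    have pp: "p \<in> PR N" "p \<notin> norming_pairs N P" using p by auto
    have "psi p P \<le> op_norm N P" using pp(1) psi_le_op_norm[OF pN] by blast
    moreover have "op_norm N P = proj_const N Y" using P by (simp add: min_projections_def)
    moreover have "psi p P \<noteq> proj_const N Y" using pp NP_eq[OF P] by blast
    ultimately have lt: "psi p P < proj_const N Y" by linarith
    have "((\<lambda>D. psi p P + D \<bullet> outer (snd p) (fst p)) \<longlongrightarrow> psi p P + 0 \<bullet> outer (snd p) (fst p)) (nhds 0)"
      by (intro tendsto_intros filterlim_ident)
    then have "eventually (\<lambda>D. psi p P + D \<bullet> outer (snd p) (fst p) < proj_const N Y) (nhds 0)"
      using lt by (intro order_tendstoD(2)) auto
    then show "eventually (\<lambda>D. psi p (P + D) < proj_const N Y) (nhds 0)"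
      by (simp add: psi_add psi_inner[of p D for D])
  qed
  then have "eventually (\<lambda>D. \<forall>p\<in>PR N - norming_pairs N P. psi p (P + D) < proj_const N Y) (nhds 0)"
    using PR_finite[OF pN] by (intro eventually_ball_finite) auto
  then show ?thesis unfolding eventually_nhds_metric by (auto simp: dist_norm)
qed

lemma L1:
  assumes P: "P \<in> min_projections N Y" and D: "D \<in> VV Y"
    and rho: "\<forall>p\<in>PR N - norming_pairs N P. psi p (P + D) < proj_const N Y"
    and le: "\<forall>p\<in>norming_pairs N P. psi p D \<le> 0"
  shows "P + D \<in> min_projections N Y"
proof -
  have PP: "is_projection P Y" using P by (simp add: min_projections_def)
  have PD: "is_projection (P + D) Y" using proj_iff[OF Y PP, of "P + D"] D by simp
  have "psi p (P + D) \<le> proj_const N Y" if p: "p \<in> PR N" for p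
  proof (cases "p \<in> norming_pairs N P")
    case True
    have a: "psi p D \<le> 0" using le True by blast
    have b: "psi p P = proj_const N Y" using True NP_eq[OF P] by blast
    show ?thesis unfolding psi_add using a b by linarith
  next
    case False
    then show ?thesis using rho p by force
  qed
  then have "op_norm N (P + D) \<le> proj_const N Y"
    unfolding op_norm_Max[OF pN] using PR_finite[OF pN] PR_ne[OF pN] by auto
  moreover have "proj_const N Y \<le> op_norm N (P + D)" by (rule pc_le[OF PD])
  ultimately show ?thesis using PD by (auto simp: min_projections_def)
qed

lemma L2:
  assumes P: "P \<in> min_projections N Y" and D: "D \<in> VV Y"
  shows "\<not> (\<forall>p\<in>norming_pairs N P. psi p D < 0)"
proof
  assume neg: "\<forall>p\<in>norming_pairs N P. psi p D < 0"
  obtain \<rho> where rho: "\<rho> > 0" "\<forall>D. norm D < \<rho> \<longrightarrow> (\<forall>p\<in>PR N - norming_pairs N P. psi p (P + D) < proj_const N Y)"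
    using margin[OF P] by blast
  define s where "s = \<rho> / (2 * (norm D + 1))"
  have h: "0 < 2 * (norm D + 1)" using norm_ge_zero[of D] by (smt (verit))
  have s0: "s > 0" unfolding s_def by (rule divide_pos_pos[OF rho(1) h])
  have "norm (s *\<^sub>R D) = s * norm D" using s0 by simp
  also have "\<dots> < \<rho>"
  proof -
    have "s * norm D \<le> s * (norm D + 1)" using s0 by simp
    also have "\<dots> = \<rho> / 2" unfolding s_def using h by (simp add: field_simps)
    finally show ?thesis using rho by simp
  qed
  finally have small: "norm (s *\<^sub>R D) < \<rho>" .
  have PP: "is_projection P Y" using P by (simp add: min_projections_def)
  have sD: "s *\<^sub>R D \<in> VV Y" using D subspace_scale[OF subspace_VV[OF Y]] by blast
  have PD: "is_projection (P + s *\<^sub>R D) Y" using proj_iff[OF Y PP, of "P + s *\<^sub>R D"] sD by simp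
  have "psi p (P + s *\<^sub>R D) < proj_const N Y" if p: "p \<in> PR N" for p
  proof (cases "p \<in> norming_pairs N P")
    case True
    have "psi p P = proj_const N Y" using True NP_eq[OF P] by blast
    moreover have "psi p D < 0" using neg True by blast
    ultimately show ?thesis using s0 by (simp add: psi_add psi_scale mult_pos_neg)
  next
    case False
    then show ?thesis using rho(2) small p by blast
  qed
  then have "op_norm N (P + s *\<^sub>R D) < proj_const N Y"
    unfolding op_norm_Max[OF pN] using PR_finite[OF pN] PR_ne[OF pN] by auto
  moreover have "proj_const N Y \<le> op_norm N (P + s *\<^sub>R D)" by (rule pc_le[OF PD])
  ultimately show False by simp
qed

lemma gordan:
  assumes P: "P \<in> min_projections N Y"
  shows "0 \<in> convex hull (gp Y ` norming_pairs N P)"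
proof (rule ccontr)
  assume n0: "0 \<notin> convex hull (gp Y ` norming_pairs N P)"
  have fin: "finite (gp Y ` norming_pairs N P)" using norming_pairs_finite[OF pN] by simp
  obtain a b where ab: "a \<noteq> 0" "0 < b" "\<forall>x\<in>convex hull (gp Y ` norming_pairs N P). b < a \<bullet> x"
    using separating_hyperplane_closed_0[OF convex_convex_hull
        compact_imp_closed[OF compact_convex_hull[OF finite_imp_compact[OF fin]]] n0] by blast
  define D where "D = - gP Y a"
  have D: "D \<in> VV Y" unfolding D_def using gP_prop[OF Y] subspace_neg[OF subspace_VV[OF Y]] by blast
  have "psi p D < 0" if p: "p \<in> norming_pairs N P" for p
  proof -
    have "gp Y p \<in> convex hull (gp Y ` norming_pairs N P)" using p by (simp add: hull_inc)
    then have "b < a \<bullet> gp Y p" using ab by blast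
    moreover have "psi p D = D \<bullet> gp Y p" by (rule psi_gp[OF Y D])
    moreover have "gp Y p \<bullet> gP Y a = gp Y p \<bullet> a" using gP_prop[OF Y] gp_VV[OF Y] by blast
    ultimately show ?thesis using ab(2) by (simp add: D_def inner_commute)
  qed
  then show False using L2[OF P D] by blast
qed

end



lemma dep_family:
  fixes v :: "nat \<Rightarrow> 'a::euclidean_space"
  assumes "dim (v ` {..<l}) < l"
  shows "\<exists>\<beta>. (\<exists>i<l. \<beta> i \<noteq> 0) \<and> (\<Sum>i<l. \<beta> i *\<^sub>R v i) = 0"
proof (cases "inj_on v {..<l}")
  case False
  then obtain i j where ij: "i < l" "j < l" "i \<noteq> j" "v i = v j" by (auto simp: inj_on_def)
  define \<beta> where "\<beta> k = (if k = i then 1 else if k = j then -1 else (0::real))" for k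
  have "(\<Sum>k<l. \<beta> k *\<^sub>R v k) = (\<Sum>k<l. (if k = i then v i else 0) - (if k = j then v j else 0))"
    by (rule sum.cong) (use ij in \<open>auto simp: \<beta>_def\<close>)
  also have "\<dots> = v i - v j" using ij by (simp add: sum_subtractf)
  also have "\<dots> = 0" using ij by simp
  finally show ?thesis using ij by (intro exI[of _ \<beta>]) (auto simp: \<beta>_def)
next
  case True
  let ?S = "v ` {..<l}"
  have cS: "card ?S = l" using True by (simp add: card_image)
  have "\<not> independent ?S"
  proof
    assume "independent ?S"
    then have "dim ?S = card ?S" by (rule dim_eq_card_independent)
    then show False using assms cS by simp
  qed
  then obtain u where u: "\<exists>w\<in>?S. u w \<noteq> 0" "(\<Sum>w\<in>?S. u w *\<^sub>R w) = 0"
    using dependent_finite[of ?S] by auto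
  define \<beta> where "\<beta> i = u (v i)" for i
  have "(\<Sum>i<l. \<beta> i *\<^sub>R v i) = (\<Sum>w\<in>?S. u w *\<^sub>R w)"
    unfolding \<beta>_def using sum.reindex[OF True, of "\<lambda>w. u w *\<^sub>R w"] by simp
  then have "(\<Sum>i<l. \<beta> i *\<^sub>R v i) = 0" using u(2) by simp
  moreover have "\<exists>i<l. \<beta> i \<noteq> 0" using u(1) by (auto simp: \<beta>_def)
  ultimately show ?thesis by blast
qed

context
  fixes N :: "real^'n \<Rightarrow> real" and Y :: "(real^'n) set"
  assumes pN: "polyhedral N" and Y: "subspace Y"
begin

lemma cm_from_weights:
  fixes l :: nat
  assumes P0: "P0 \<in> min_projections N Y"
    and pr: "\<forall>i<l. x i \<in> EB N \<and> f i \<in> ED N \<and> f i \<bullet> (P0 *v x i) = proj_const N Y"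
    and nn: "\<forall>i<l. 0 \<le> \<alpha> i" and s1: "(\<Sum>i<l. \<alpha> i) = 1"
    and cm: "\<forall>y\<in>Y. (\<Sum>i<l. (\<alpha> i * (f i \<bullet> y)) *\<^sub>R x i) \<in> Y"
  shows "CM_supported N Y (card {i. i < l \<and> 0 < \<alpha> i})"
proof -
  define S where "S = {i. i < l \<and> 0 < \<alpha> i}"
  have finS: "finite S" unfolding S_def by (rule finite_subset[of _ "{..<l}"]) auto
  obtain h where h: "bij_betw h {0..<card S} S" using ex_bij_betw_nat_finite[OF finS] by blast
  have hS: "h i \<in> S" if "i < card S" for i using h that by (auto simp: bij_betw_def)
  have zero: "\<alpha> i = 0" if "i \<in> {..<l} - S" for i using that nn by (force simp: S_def)
  have Ssub: "S \<subseteq> {..<l}" by (auto simp: S_def)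
  have sumeq: "(\<Sum>i<card S. g (h i)) = (\<Sum>i<l. g i)"
    if "\<And>i. i \<in> {..<l} - S \<Longrightarrow> g i = 0" for g :: "nat \<Rightarrow> 'b::comm_monoid_add"
  proof -
    have "(\<Sum>i<card S. g (h i)) = (\<Sum>i\<in>S. g i)"
      using sum.reindex_bij_betw[OF h, of g] by (simp add: atLeast0LessThan)
    also have "\<dots> = (\<Sum>i<l. g i)" by (rule sum.mono_neutral_left) (use Ssub that in auto)
    finally show ?thesis .
  qed
  show ?thesis unfolding CM_supported_def S_def[symmetric]
  proof (rule exI[of _ "\<lambda>i. x (h i)"], rule exI[of _ "\<lambda>i. f (h i)"], rule exI[of _ "\<lambda>i. \<alpha> (h i)"],
      rule exI[of _ P0], intro conjI)
    show "P0 \<in> min_projections N Y" by (rule P0)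
    show "\<forall>i<card S. x (h i) extreme_point_of unit_ball N \<and> f (h i) extreme_point_of dual_ball N \<and>
        0 < \<alpha> (h i) \<and> f (h i) \<bullet> (P0 *v x (h i)) = proj_const N Y"
    proof (intro allI impI)
      fix i assume i: "i < card S"
      have "h i \<in> S" by (rule hS[OF i])
      then show "x (h i) extreme_point_of unit_ball N \<and> f (h i) extreme_point_of dual_ball N \<and>
        0 < \<alpha> (h i) \<and> f (h i) \<bullet> (P0 *v x (h i)) = proj_const N Y"
        using pr by (auto simp: S_def EB_def ED_def)
    qed
    have "(\<Sum>i<card S. \<alpha> (h i)) = (\<Sum>i<l. \<alpha> i)" by (rule sumeq) (rule zero)
    then show "(\<Sum>i<card S. \<alpha> (h i)) = 1" using s1 by simp
    show "\<forall>y\<in>Y. (\<Sum>i<card S. (\<alpha> (h i) * (f (h i) \<bullet> y)) *\<^sub>R x (h i)) \<in> Y"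
    proof
      fix y assume y: "y \<in> Y"
      have "(\<Sum>i<card S. (\<alpha> (h i) * (f (h i) \<bullet> y)) *\<^sub>R x (h i)) = (\<Sum>i<l. (\<alpha> i * (f i \<bullet> y)) *\<^sub>R x i)"
        by (rule sumeq[of "\<lambda>i. (\<alpha> i * (f i \<bullet> y)) *\<^sub>R x i"]) (simp add: zero)
      then show "(\<Sum>i<card S. (\<alpha> (h i) * (f (h i) \<bullet> y)) *\<^sub>R x (h i)) \<in> Y" using cm y by simp
    qed
  qed
qed

lemma CM_exists: "\<exists>l. CM_supported N Y l"
proof -
  obtain P where P: "P \<in> min_projections N Y" using minP_ne[OF pN Y] by blast
  define G where "G = gp Y ` norming_pairs N P"
  have finG: "finite G" using norming_pairs_finite[OF pN] by (simp add: G_def)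
  have "0 \<in> convex hull G" using gordan[OF pN Y P] by (simp add: G_def)
  then obtain u where u: "\<forall>g\<in>G. 0 \<le> u g" "sum u G = 1" "(\<Sum>g\<in>G. u g *\<^sub>R g) = 0"
    unfolding convex_hull_finite[OF finG] by auto
  define r where "r g = (SOME p. p \<in> norming_pairs N P \<and> gp Y p = g)" for g
  have r: "r g \<in> norming_pairs N P \<and> gp Y (r g) = g" if "g \<in> G" for g
    unfolding r_def by (rule someI_ex) (use that in \<open>auto simp: G_def\<close>)
  obtain h where h: "bij_betw h {0..<card G} G" using ex_bij_betw_nat_finite[OF finG] by blast
  have hG: "h i \<in> G" if "i < card G" for i using h that by (auto simp: bij_betw_def)
  define x where "x i = fst (r (h i))" for i
  define f where "f i = snd (r (h i))" for i
  define \<alpha> where "\<alpha> i = u (h i)" for i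
  have reidx: "(\<Sum>i<card G. g (h i)) = (\<Sum>w\<in>G. g w)" for g :: "_ \<Rightarrow> 'b::comm_monoid_add"
    using sum.reindex_bij_betw[OF h, of g] by (simp add: atLeast0LessThan)
  have pr: "\<forall>i<card G. x i \<in> EB N \<and> f i \<in> ED N \<and> f i \<bullet> (P *v x i) = proj_const N Y"
  proof (intro allI impI)
    fix i assume i: "i < card G"
    have "r (h i) \<in> norming_pairs N P" using r hG[OF i] by blast
    then have "r (h i) \<in> PR N" "psi (r (h i)) P = proj_const N Y" using NP_eq[OF pN Y P] by blast+
    then show "x i \<in> EB N \<and> f i \<in> ED N \<and> f i \<bullet> (P *v x i) = proj_const N Y"
      by (auto simp: x_def f_def PR_def psi_def mem_Times_iff)
  qed
  have nn: "\<forall>i<card G. 0 \<le> \<alpha> i" using u(1) hG by (auto simp: \<alpha>_def)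
  have s1: "(\<Sum>i<card G. \<alpha> i) = 1" using reidx[of u] u(2) by (simp add: \<alpha>_def)
  have cmD: "\<forall>D\<in>VV Y. (\<Sum>i<card G. \<alpha> i * (f i \<bullet> (D *v x i))) = 0"
  proof
    fix D assume D: "D \<in> VV Y"
    have "(\<Sum>i<card G. \<alpha> i * (f i \<bullet> (D *v x i))) = (\<Sum>i<card G. u (h i) * (D \<bullet> h i))"
    proof (rule sum.cong[OF refl])
      fix i assume "i \<in> {..<card G}"
      then have i: "i < card G" by simp
      have "f i \<bullet> (D *v x i) = psi (r (h i)) D" by (simp add: psi_def x_def f_def)
      also have "\<dots> = D \<bullet> gp Y (r (h i))" by (rule psi_gp[OF Y D])
      also have "\<dots> = D \<bullet> h i" using r hG[OF i] by simp
      finally show "\<alpha> i * (f i \<bullet> (D *v x i)) = u (h i) * (D \<bullet> h i)" by (simp add: \<alpha>_def)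
    qed
    also have "\<dots> = (\<Sum>w\<in>G. u w * (D \<bullet> w))" by (rule reidx)
    also have "\<dots> = D \<bullet> (\<Sum>w\<in>G. u w *\<^sub>R w)" by (simp add: inner_sum_right)
    also have "\<dots> = 0" using u(3) by simp
    finally show "(\<Sum>i<card G. \<alpha> i * (f i \<bullet> (D *v x i))) = 0" .
  qed
  have cm: "\<forall>y\<in>Y. (\<Sum>i<card G. (\<alpha> i * (f i \<bullet> y)) *\<^sub>R x i) \<in> Y"
    using cmD cm_equiv[OF Y, where A="{..<card G}" and c=\<alpha> and f=f and x=x] by blast
  show ?thesis using cm_from_weights[OF P pr nn s1 cm] by blast
qed

lemma upper:
  "aff_dim (min_projections N Y) \<le> int (dim (VV Y)) - int (min_CM_support N Y) + 1"
proof -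
  define l where "l = min_CM_support N Y"
  have cms: "CM_supported N Y l" unfolding l_def min_CM_support_def using CM_exists by (rule LeastI_ex)
  then obtain x f \<alpha> P0 where P0: "P0 \<in> min_projections N Y"
    and pr: "\<forall>i<l. x i extreme_point_of unit_ball N \<and> f i extreme_point_of dual_ball N \<and> 0 < \<alpha> i
               \<and> f i \<bullet> (P0 *v x i) = proj_const N Y"
    and s1: "(\<Sum>i<l. \<alpha> i) = 1" and cm: "\<forall>y\<in>Y. (\<Sum>i<l. (\<alpha> i * (f i \<bullet> y)) *\<^sub>R x i) \<in> Y"
    unfolding CM_supported_def by blast
  have minl: "\<not> CM_supported N Y l'" if "l' < l" for l'
    using that not_less_Least unfolding l_def min_CM_support_def by blast
  have P0p: "is_projection P0 Y" using P0 by (simp add: min_projections_def)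
  define g where "g i = gp Y (x i, f i)" for i
  define G where "G = g ` {..<l}"
  have GV: "G \<subseteq> VV Y" using gp_VV[OF Y] by (auto simp: G_def g_def)
  have spG: "span G \<subseteq> VV Y" using GV subspace_VV[OF Y] by (rule span_minimal)
  have cmD: "\<forall>D\<in>VV Y. (\<Sum>i<l. \<alpha> i * (f i \<bullet> (D *v x i))) = 0"
    using cm cm_equiv[OF Y, where A="{..<l}" and c=\<alpha> and f=f and x=x] by blast
  have prPR: "(x j, f j) \<in> PR N" if "j < l" for j using pr that by (auto simp: PR_def EB_def ED_def)
  have eqA: "f i \<bullet> (Q *v x i) = proj_const N Y" if Q: "Q \<in> min_projections N Y" and i: "i < l" for Q i
  proof -
    have Qp: "is_projection Q Y" and Qn: "op_norm N Q = proj_const N Y" using Q by (auto simp: min_projections_def)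
    have D: "Q - P0 \<in> VV Y" using proj_iff[OF Y P0p] Qp by blast
    have le: "f j \<bullet> (Q *v x j) \<le> proj_const N Y" if "j < l" for j
    proof -
      have "psi (x j, f j) Q \<le> op_norm N Q" by (rule psi_le_op_norm[OF pN prPR[OF that]])
      then show ?thesis using Qn by (simp add: psi_def)
    qed
    have trm: "\<alpha> j * (proj_const N Y - f j \<bullet> (Q *v x j)) = - (\<alpha> j * (f j \<bullet> ((Q - P0) *v x j)))"
      if "j \<in> {..<l}" for j
      using pr that by (simp add: mulv_diff inner_diff_right algebra_simps)
    have "(\<Sum>j<l. \<alpha> j * (proj_const N Y - f j \<bullet> (Q *v x j))) = (\<Sum>j<l. - (\<alpha> j * (f j \<bullet> ((Q - P0) *v x j))))"
      by (rule sum.cong[OF refl trm])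
    also have "\<dots> = - (\<Sum>j<l. \<alpha> j * (f j \<bullet> ((Q - P0) *v x j)))" by (simp add: sum_negf)
    also have "\<dots> = 0" using cmD D by simp
    finally have z: "(\<Sum>j<l. \<alpha> j * (proj_const N Y - f j \<bullet> (Q *v x j))) = 0" .
    have nn: "0 \<le> \<alpha> j * (proj_const N Y - f j \<bullet> (Q *v x j))" if "j \<in> {..<l}" for j
    proof -
      have "0 < \<alpha> j" using pr that by simp
      moreover have "0 \<le> proj_const N Y - f j \<bullet> (Q *v x j)" using le that by simp
      ultimately show ?thesis by simp
    qed
    have "\<forall>j\<in>{..<l}. \<alpha> j * (proj_const N Y - f j \<bullet> (Q *v x j)) = 0"
      using z sum_nonneg_eq_0_iff[of "{..<l}", OF _ nn] by simp
    then have "\<alpha> i * (proj_const N Y - f i \<bullet> (Q *v x i)) = 0" using i by blast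
    moreover have "0 < \<alpha> i" using pr i by simp
    ultimately show ?thesis by simp
  qed
  define W where "W = {y \<in> VV Y. \<forall>z\<in>span G. orthogonal z y}"
  have sub: "min_projections N Y \<subseteq> (+) P0 ` W"
  proof
    fix Q assume Q: "Q \<in> min_projections N Y"
    have D: "Q - P0 \<in> VV Y" using proj_iff[OF Y P0p] Q by (auto simp: min_projections_def)
    have "orthogonal z (Q - P0)" if "z \<in> span G" for z
    proof -
      have "orthogonal (Q - P0) z"
      proof (rule orthogonal_to_span[OF that])
        fix w assume "w \<in> G"
        then obtain i where i: "i < l" "w = g i" by (auto simp: G_def)
        have "(Q - P0) \<bullet> g i = psi (x i, f i) (Q - P0)" using psi_gp[OF Y D] by (simp add: g_def)
        also have "\<dots> = f i \<bullet> (Q *v x i) - f i \<bullet> (P0 *v x i)" by (simp add: psi_def mulv_diff inner_diff_right)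
        also have "\<dots> = 0" using eqA[OF Q i(1)] pr i(1) by simp
        finally show "orthogonal (Q - P0) w" using i by (simp add: orthogonal_def)
      qed
      then show ?thesis by (simp add: orthogonal_commute)
    qed
    then have "Q - P0 \<in> W" using D by (simp add: W_def)
    then show "Q \<in> (+) P0 ` W" by (intro image_eqI[of _ _ "Q - P0"]) auto
  qed
  have subW: "subspace W"
    using subspace_VV[OF Y] unfolding subspace_def W_def orthogonal_def
    by (auto simp: inner_add_right)
  have dimW: "dim W + dim G = dim (VV Y)"
    using dim_subspace_orthogonal_to_vectors[OF subspace_span subspace_VV[OF Y] spG] by (simp add: W_def)
  have dimG: "l \<le> dim G + 1"
  proof (rule ccontr)
    assume "\<not> l \<le> dim G + 1"
    then have lt: "dim G + 2 \<le> l" by simp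
    define hv where "hv i = (g i, 1::real)" for i
    define emb where "emb = (\<lambda>v::real^'n^'n. (v, 0::real))"
    have lin: "linear emb" unfolding emb_def by (rule linearI) auto
    have "hv ` {..<l} \<subseteq> span (insert (0, 1) (emb ` G))"
    proof
      fix w assume "w \<in> hv ` {..<l}"
      then obtain i where i: "i < l" "w = hv i" by auto
      have "w = emb (g i) + (0, 1)" using i by (simp add: hv_def emb_def)
      moreover have "emb (g i) \<in> span (insert (0, 1) (emb ` G))" using i by (intro span_base) (auto simp: G_def)
      moreover have "(0, 1) \<in> span (insert (0, 1) (emb ` G))" by (intro span_base) auto
      ultimately show "w \<in> span (insert (0, 1) (emb ` G))" by (simp add: span_add)
    qed
    then have "dim (hv ` {..<l}) \<le> dim (insert (0, 1) (emb ` G))" by (rule dim_mono)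
    also have "\<dots> \<le> dim (emb ` G) + 1" by (simp add: dim_insert)
    also have "dim (emb ` G) \<le> dim G" by (rule dim_image_le[OF lin])
    finally have "dim (hv ` {..<l}) < l" using lt by simp
    then obtain \<beta> where \<beta>: "\<exists>i<l. \<beta> i \<noteq> 0" "(\<Sum>i<l. \<beta> i *\<^sub>R hv i) = 0" using dep_family by blast
    have "fst (\<Sum>i<l. \<beta> i *\<^sub>R hv i) = 0" using \<beta>(2) by simp
    then have bg: "(\<Sum>i<l. \<beta> i *\<^sub>R g i) = 0" by (simp add: hv_def fst_sum)
    have "snd (\<Sum>i<l. \<beta> i *\<^sub>R hv i) = 0" using \<beta>(2) by simp
    then have bs: "(\<Sum>i<l. \<beta> i) = 0" by (simp add: hv_def snd_sum)
    obtain \<gamma> where \<gamma>: "(\<Sum>i<l. \<gamma> i) = 0" "(\<Sum>i<l. \<gamma> i *\<^sub>R g i) = 0" "\<exists>i<l. 0 < \<gamma> i"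
    proof (cases "\<exists>i<l. 0 < \<beta> i")
      case True
      then show ?thesis using that bg bs by blast
    next
      case False
      then obtain i where i: "i < l" "\<beta> i < 0" using \<beta>(1) by force
      have "(\<Sum>i<l. - \<beta> i) = 0" using bs by (simp add: sum_negf)
      moreover have "(\<Sum>i<l. (- \<beta> i) *\<^sub>R g i) = 0" using bg by (simp add: sum_negf)
      moreover have "\<exists>i<l. 0 < - \<beta> i" using i by auto
      ultimately show ?thesis using that[of "\<lambda>i. - \<beta> i"] by blast
    qed
    define J where "J = {i. i < l \<and> 0 < \<gamma> i}"
    have finJ: "finite J" and neJ: "J \<noteq> {}" using \<gamma>(3) by (auto simp: J_def)
    define t where "t = Min ((\<lambda>i. \<alpha> i / \<gamma> i) ` J)"
    have "t \<in> (\<lambda>i. \<alpha> i / \<gamma> i) ` J" unfolding t_def by (rule Min_in) (use finJ neJ in auto)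
    then obtain j where j: "j \<in> J" "t = \<alpha> j / \<gamma> j" by auto
    have t0: "0 < t" using j pr by (auto simp: J_def)
    have tle: "t \<le> \<alpha> i / \<gamma> i" if "i \<in> J" for i unfolding t_def using finJ that by auto
    define \<alpha>' where "\<alpha>' i = \<alpha> i - t * \<gamma> i" for i
    have nn': "\<forall>i<l. 0 \<le> \<alpha>' i"
    proof (intro allI impI)
      fix i assume i: "i < l"
      show "0 \<le> \<alpha>' i"
      proof (cases "0 < \<gamma> i")
        case True
        then have "t \<le> \<alpha> i / \<gamma> i" using tle i by (auto simp: J_def)
        then have "t * \<gamma> i \<le> \<alpha> i" using True by (simp add: pos_le_divide_eq)
        then show ?thesis by (simp add: \<alpha>'_def)
      next
        case False
        then have "t * \<gamma> i \<le> 0" using t0 by (simp add: mult_nonneg_nonpos)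
        moreover have "0 < \<alpha> i" using pr i by simp
        ultimately show ?thesis by (simp add: \<alpha>'_def)
      qed
    qed
    have aj: "\<alpha>' j = 0" using j by (auto simp: \<alpha>'_def J_def)
    have s1': "(\<Sum>i<l. \<alpha>' i) = 1"
      using s1 \<gamma>(1) by (simp add: \<alpha>'_def sum_subtractf sum_distrib_left[symmetric])
    have cmD': "\<forall>D\<in>VV Y. (\<Sum>i<l. \<alpha>' i * (f i \<bullet> (D *v x i))) = 0"
    proof
      fix D assume D: "D \<in> VV Y"
      have "(\<Sum>i<l. \<gamma> i * (f i \<bullet> (D *v x i))) = (\<Sum>i<l. \<gamma> i * (D \<bullet> g i))"
      proof (rule sum.cong[OF refl])
        fix i
        have "f i \<bullet> (D *v x i) = psi (x i, f i) D" by (simp add: psi_def)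
        also have "\<dots> = D \<bullet> g i" unfolding g_def by (rule psi_gp[OF Y D])
        finally show "\<gamma> i * (f i \<bullet> (D *v x i)) = \<gamma> i * (D \<bullet> g i)" by simp
      qed
      also have "\<dots> = D \<bullet> (\<Sum>i<l. \<gamma> i *\<^sub>R g i)" by (simp add: inner_sum_right)
      also have "\<dots> = 0" using \<gamma>(2) by simp
      finally have z: "(\<Sum>i<l. \<gamma> i * (f i \<bullet> (D *v x i))) = 0" .
      have "(\<Sum>i<l. \<alpha>' i * (f i \<bullet> (D *v x i)))
          = (\<Sum>i<l. \<alpha> i * (f i \<bullet> (D *v x i))) - t * (\<Sum>i<l. \<gamma> i * (f i \<bullet> (D *v x i)))"
        by (simp add: \<alpha>'_def algebra_simps sum_subtractf sum_distrib_left)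
      then show "(\<Sum>i<l. \<alpha>' i * (f i \<bullet> (D *v x i))) = 0" using z cmD D by simp
    qed
    have cm': "\<forall>y\<in>Y. (\<Sum>i<l. (\<alpha>' i * (f i \<bullet> y)) *\<^sub>R x i) \<in> Y"
      using cmD' cm_equiv[OF Y, where A="{..<l}" and c=\<alpha>' and f=f and x=x] by blast
    have pr': "\<forall>i<l. x i \<in> EB N \<and> f i \<in> ED N \<and> f i \<bullet> (P0 *v x i) = proj_const N Y"
      using pr by (auto simp: EB_def ED_def)
    have cs: "CM_supported N Y (card {i. i < l \<and> 0 < \<alpha>' i})"
      by (rule cm_from_weights[OF P0 pr' nn' s1' cm'])
    have js: "j < l" using j by (simp add: J_def)
    have ps: "{i. i < l \<and> 0 < \<alpha>' i} \<subset> {..<l}"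
    proof (rule psubsetI)
      show "{i. i < l \<and> 0 < \<alpha>' i} \<subseteq> {..<l}" by auto
      have "j \<in> {..<l}" using js by simp
      moreover have "j \<notin> {i. i < l \<and> 0 < \<alpha>' i}" using aj by simp
      ultimately show "{i. i < l \<and> 0 < \<alpha>' i} \<noteq> {..<l}" by blast
    qed
    have "card {i. i < l \<and> 0 < \<alpha>' i} < l" using psubset_card_mono[OF finite_lessThan ps] by simp
    then show False using minl cs by blast
  qed
  have "aff_dim (min_projections N Y) \<le> aff_dim ((+) P0 ` W)" by (rule aff_dim_subset[OF sub])
  also have "\<dots> = aff_dim W" by (rule aff_dim_translation_eq)
  also have "\<dots> = int (dim W)" by (rule aff_dim_subspace[OF subW])
  finally show ?thesis using dimW dimG unfolding l_def by linarith
qed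

lemma lower:
  "int (dim (VV Y)) - int (min_norming_pairs N Y) + 1 \<le> aff_dim (min_projections N Y)"
proof -
  define m where "m = min_norming_pairs N Y"
  obtain P1 where P1: "P1 \<in> min_projections N Y" using minP_ne[OF pN Y] by blast
  have "\<exists>P\<in>min_projections N Y. card (norming_pairs N P) = m"
    unfolding m_def min_norming_pairs_def by (rule LeastI_ex) (use P1 in blast)
  then obtain P where P: "P \<in> min_projections N Y" "card (norming_pairs N P) = m" by blast
  define G where "G = gp Y ` norming_pairs N P"
  have finNP: "finite (norming_pairs N P)" by (rule norming_pairs_finite[OF pN])
  have finG: "finite G" using finNP by (simp add: G_def)
  have GV: "G \<subseteq> VV Y" using gp_VV[OF Y] by (auto simp: G_def)
  have spG: "span G \<subseteq> VV Y" using GV subspace_VV[OF Y] by (rule span_minimal)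
  have dimG: "dim G + 1 \<le> m"
  proof -
    have "0 \<in> convex hull G" using gordan[OF pN Y P(1)] by (simp add: G_def)
    then obtain u where u: "\<forall>g\<in>G. 0 \<le> u g" "sum u G = 1" "(\<Sum>g\<in>G. u g *\<^sub>R g) = 0"
      unfolding convex_hull_finite[OF finG] by auto
    have "\<exists>g\<in>G. u g \<noteq> 0"
    proof (rule ccontr)
      assume "\<not> (\<exists>g\<in>G. u g \<noteq> 0)"
      then have "sum u G = 0" by simp
      then show False using u(2) by simp
    qed
    then have dep: "dependent G" unfolding dependent_finite[OF finG] using u(3) by blast
    have "dim G \<le> card G" by (rule dim_le_card[OF span_superset finG])
    moreover have "dim G \<noteq> card G"
    proof
      assume "dim G = card G"
      then have "independent G" using card_eq_dim[of G G] finG span_superset[of G] by simp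
      then show False using dep by simp
    qed
    moreover have "card G \<le> m" unfolding G_def using card_image_le[OF finNP] P(2) by simp
    ultimately show ?thesis by simp
  qed
  define W where "W = {y \<in> VV Y. \<forall>z\<in>span G. orthogonal z y}"
  have subW: "subspace W"
    using subspace_VV[OF Y] unfolding subspace_def W_def orthogonal_def
    by (auto simp: inner_add_right)
  have dimW: "dim W + dim G = dim (VV Y)"
    using dim_subspace_orthogonal_to_vectors[OF subspace_span subspace_VV[OF Y] spG] by (simp add: W_def)
  obtain \<rho> where rho: "\<rho> > 0" "\<forall>D. norm D < \<rho> \<longrightarrow> (\<forall>p\<in>PR N - norming_pairs N P. psi p (P + D) < proj_const N Y)"
    using margin[OF pN Y P(1)] by blast
  have sub: "(+) P ` (W \<inter> ball 0 \<rho>) \<subseteq> min_projections N Y"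
  proof
    fix Q assume "Q \<in> (+) P ` (W \<inter> ball 0 \<rho>)"
    then obtain D where D: "D \<in> W" "D \<in> ball 0 \<rho>" "Q = P + D" by auto
    have DV: "D \<in> VV Y" using D by (simp add: W_def)
    have nD: "norm D < \<rho>" using D by simp
    have "\<forall>p\<in>norming_pairs N P. psi p D \<le> 0"
    proof
      fix p assume p: "p \<in> norming_pairs N P"
      have "gp Y p \<in> span G" using p by (intro span_base) (auto simp: G_def)
      then have "orthogonal (gp Y p) D" using D by (auto simp: W_def)
      then show "psi p D \<le> 0" using psi_gp[OF Y DV, of p] by (simp add: orthogonal_def inner_commute)
    qed
    then show "Q \<in> min_projections N Y" using L1[OF pN Y P(1) DV] rho nD D(3) by blast
  qed
  have "int (dim W) = aff_dim W" by (rule aff_dim_subspace[OF subW, symmetric])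
  also have "\<dots> = aff_dim (W \<inter> ball 0 \<rho>)"
    using subspace_imp_convex[OF subW] subspace_0[OF subW] rho(1)
    by (intro aff_dim_convex_Int_open[symmetric]) auto
  also have "\<dots> = aff_dim ((+) P ` (W \<inter> ball 0 \<rho>))" by (rule aff_dim_translation_eq[symmetric])
  also have "\<dots> \<le> aff_dim (min_projections N Y)" by (rule aff_dim_subset[OF sub])
  finally show ?thesis using dimW dimG unfolding m_def by linarith
qed

end


theorem mainTheorem10:
  fixes N :: "real^'n \<Rightarrow> real" and Y :: "(real^'n) set" and k :: nat
  assumes "polyhedral N"
    and "subspace Y" and "dim Y = k"
    and "1 \<le> k" and "k \<le> CARD('n) - 1"
  shows "int (k * (CARD('n) - k)) - int (min_norming_pairs N Y) + 1 \<le> aff_dim (min_projections N Y)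
       \<and> aff_dim (min_projections N Y) \<le> int (k * (CARD('n) - k)) - int (min_CM_support N Y) + 1"
proof -
  have "dim (VV Y) = k * (CARD('n) - k)" using dim_VV[OF assms(2)] assms(3) by simp
  then show ?thesis using lower[OF assms(1,2)] upper[OF assms(1,2)] by simp
qed

end
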